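(* Let $k\ge 2$ be an integer, $X$ a locally finite poset and $F$ a field admitting a primitive $(k-1)$-th root of unity. Then $f\in I(X,F)$ satisfies $f^k=f$ if and only if $f=\sigma d\sigma^{-1}$ for some invertible $\sigma\in I(X,F)$ and some diagonal $d\in I(X,F)$ each of whose diagonal entries $d(x,x)$ is either $0$ or a $(k-1)$-th root of unity in $F$.
   Context: $I(X,F)$ is the incidence algebra of the locally finite poset $X$ over $F$: functions $f:X\times X\to F$ vanishing unless $x\le y$, with product $(fg)(x,y)=\sum_{x\le z\le y}f(x,z)g(z,y)$. An element $d$ is diagonal if $d(x,y)=0$ whenever $x\ne y$. *)

theory Defs
  imports Main
begin

text \<open>The poset X is the universe of a type of class order; local finiteness is an explicit
assumption in the statement.\<close>

definition incidence_algebra :: "('a::order \<Rightarrow> 'a \<Rightarrow> 'b::field) set" where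
  "incidence_algebra = {f. \<forall>x y. \<not> x \<le> y \<longrightarrow> f x y = 0}"

definition locally_finite_poset :: "'a::order itself \<Rightarrow> bool" where
  "locally_finite_poset _ \<longleftrightarrow> (\<forall>x y::'a. finite {x..y})"

definition inc_mult :: "('a::order \<Rightarrow> 'a \<Rightarrow> 'b::field) \<Rightarrow> ('a \<Rightarrow> 'a \<Rightarrow> 'b) \<Rightarrow> ('a \<Rightarrow> 'a \<Rightarrow> 'b)" where
  "inc_mult f g = (\<lambda>x y. \<Sum>z\<in>{x..y}. f x z * g z y)"

definition inc_one :: "'a::order \<Rightarrow> 'a \<Rightarrow> 'b::field" where
  "inc_one = (\<lambda>x y. if x = y then 1 else 0)"

primrec inc_pow :: "('a::order \<Rightarrow> 'a \<Rightarrow> 'b::field) \<Rightarrow> nat \<Rightarrow> ('a \<Rightarrow> 'a \<Rightarrow> 'b)" where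
  "inc_pow f 0 = inc_one"
| "inc_pow f (Suc n) = inc_mult f (inc_pow f n)"

definition is_diagonal :: "('a \<Rightarrow> 'a \<Rightarrow> 'b::zero) \<Rightarrow> bool" where
  "is_diagonal d \<longleftrightarrow> (\<forall>x y. x \<noteq> y \<longrightarrow> d x y = 0)"

definition primitive_root_of_unity :: "nat \<Rightarrow> 'b::field \<Rightarrow> bool" where
  "primitive_root_of_unity n \<omega> \<longleftrightarrow> \<omega> ^ n = 1 \<and> (\<forall>j. 0 < j \<and> j < n \<longrightarrow> \<omega> ^ j \<noteq> 1)"

end

theory Submission
  imports Defs "HOL-Computational_Algebra.Primes"
begin

abbreviation "IA \<equiv> incidence_algebra"

lemma IA_iff: "f \<in> IA \<longleftrightarrow> (\<forall>x y. \<not> x \<le> y \<longrightarrow> f x y = 0)"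
  by (simp add: incidence_algebra_def)

lemma mult_IA: "inc_mult f g \<in> IA"
  by (auto simp: IA_iff inc_mult_def)

lemma one_IA: "inc_one \<in> IA"
  by (auto simp: IA_iff inc_one_def)

lemma pow_IA: "inc_pow f n \<in> IA"
  by (cases n) (auto simp: one_IA mult_IA)

lemma mult_one_right:
  fixes f :: "'a::order \<Rightarrow> 'a \<Rightarrow> 'b::field"
  assumes LF: "\<forall>x y::'a. finite {x..y}" and f: "f \<in> IA"
  shows "inc_mult f inc_one = f"
proof (rule ext, rule ext)
  fix x y :: 'a
  have "inc_mult f inc_one x y = (\<Sum>z\<in>{x..y}. if z = y then f x y else 0)"
    unfolding inc_mult_def inc_one_def by (rule sum.cong) auto
  also have "\<dots> = (if y \<in> {x..y} then f x y else 0)" using LF[rule_format, of x y] by simp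
  also have "\<dots> = f x y" using f by (auto simp: IA_iff)
  finally show "inc_mult f inc_one x y = f x y" .
qed

lemma mult_one_left:
  fixes f :: "'a::order \<Rightarrow> 'a \<Rightarrow> 'b::field"
  assumes LF: "\<forall>x y::'a. finite {x..y}" and f: "f \<in> IA"
  shows "inc_mult inc_one f = f"
proof (rule ext, rule ext)
  fix x y :: 'a
  have "inc_mult inc_one f x y = (\<Sum>z\<in>{x..y}. if x = z then f x y else 0)"
    unfolding inc_mult_def inc_one_def by (rule sum.cong) auto
  also have "\<dots> = (if x \<in> {x..y} then f x y else 0)" using LF[rule_format, of x y] by simp
  also have "\<dots> = f x y" using f by (auto simp: IA_iff)
  finally show "inc_mult inc_one f x y = f x y" .
qed

lemma mult_diag: "inc_mult f g x x = f x x * g x x"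
  by (simp add: inc_mult_def)

lemma pow_diag: "inc_pow f n x x = f x x ^ n"
  by (induct n) (auto simp: inc_one_def mult_diag)

lemma assoc:
  assumes LF: "\<forall>x y::'a::order. finite {x..y}" and g: "g \<in> IA"
  shows "inc_mult (inc_mult f g) h = inc_mult f (inc_mult g (h::'a\<Rightarrow>'a\<Rightarrow>'b::field))"
proof (rule ext, rule ext)
  fix x y :: 'a
  let ?I = "{x..y}"
  have fin: "finite ?I" using LF by blast
  have s1: "(\<Sum>w\<in>{x..z}. f x w * g w z) = (\<Sum>w\<in>?I. f x w * g w z)" if "z \<in> ?I" for z
    by (rule sum.mono_neutral_left) (use that g fin in \<open>auto simp: IA_iff\<close>)
  have s2: "(\<Sum>z\<in>{w..y}. g w z * h z y) = (\<Sum>z\<in>?I. g w z * h z y)" if "w \<in> ?I" for w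
    by (rule sum.mono_neutral_left) (use that g fin in \<open>auto simp: IA_iff\<close>)
  have "inc_mult (inc_mult f g) h x y = (\<Sum>z\<in>?I. (\<Sum>w\<in>?I. f x w * g w z) * h z y)"
    unfolding inc_mult_def using s1 by (intro sum.cong) auto
  also have "\<dots> = (\<Sum>z\<in>?I. \<Sum>w\<in>?I. f x w * g w z * h z y)"
    by (simp add: sum_distrib_right)
  also have "\<dots> = (\<Sum>w\<in>?I. \<Sum>z\<in>?I. f x w * g w z * h z y)"
    by (rule sum.swap)
  also have "\<dots> = (\<Sum>w\<in>?I. f x w * (\<Sum>z\<in>?I. g w z * h z y))"
    by (simp add: sum_distrib_left mult.assoc)
  also have "\<dots> = inc_mult f (inc_mult g h) x y"
    unfolding inc_mult_def using s2 by (intro sum.cong) auto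
  finally show "inc_mult (inc_mult f g) h x y = inc_mult f (inc_mult g h) x y" .
qed


lemma nil_bound:
  fixes N :: "'a::order \<Rightarrow> 'a \<Rightarrow> 'b::field"
  assumes LF: "\<forall>x y::'a. finite {x..y}" and N: "N \<in> IA" and N0: "\<forall>x. N x x = 0"
  shows "inc_pow N j x y \<noteq> 0 \<Longrightarrow> j < card {x..y}"
proof (induct j arbitrary: x y)
  case 0
  then have "x = y" by (auto simp: inc_one_def split: if_splits)
  then show ?case by simp
next
  case (Suc j)
  then have "(\<Sum>z\<in>{x..y}. N x z * inc_pow N j z y) \<noteq> 0" by (simp add: inc_mult_def)
  then obtain z where z: "z \<in> {x..y}" "N x z * inc_pow N j z y \<noteq> 0"
    by (meson sum.neutral)
  then have "N x z \<noteq> 0" "inc_pow N j z y \<noteq> 0" by auto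
  with N N0 z have xz: "x < z" by (auto simp: IA_iff) (metis order.not_eq_order_implies_strict)
  have IH: "j < card {z..y}" using Suc.hyps \<open>inc_pow N j z y \<noteq> 0\<close> by blast
  have "{z..y} \<subset> {x..y}" using xz z by auto
  then have "card {z..y} < card {x..y}" using LF by (intro psubset_card_mono) auto
  then show ?case using IH by simp
qed

lemma unitri_right_inv:
  fixes s :: "'a::order \<Rightarrow> 'a \<Rightarrow> 'b::field"
  assumes LF: "\<forall>x y::'a. finite {x..y}" and s: "s \<in> IA" and s1: "\<forall>x. s x x = 1"
  shows "\<exists>t. t \<in> IA \<and> inc_mult s t = inc_one \<and> (\<forall>x. t x x = 1)"
proof -
  define N where "N = (\<lambda>x y. inc_one x y - s x y)"
  have N: "N \<in> IA" using s by (auto simp: IA_iff N_def inc_one_def)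
  have N0: "\<forall>x. N x x = 0" using s1 by (simp add: N_def inc_one_def)
  have Nz: "inc_pow N j x y = 0" if "card {x..y} \<le> j" for j x y
    using nil_bound[OF LF N N0, of j x y] that by linarith
  define t where "t = (\<lambda>x y. \<Sum>j<card {x..y}. inc_pow N j x y)"
  have tIA: "t \<in> IA" by (auto simp: IA_iff t_def)
  have tdiag: "\<forall>x. t x x = 1"
    by (simp add: t_def inc_one_def)
  have "inc_mult s t x y = inc_one x y" for x y
  proof -
    let ?I = "{x..y}" let ?M = "card ?I"
    have fin: "finite ?I" using LF by blast
    have ext: "t z y = (\<Sum>j<?M. inc_pow N j z y)" if "z \<in> ?I" for z
    proof -
      have "card {z..y} \<le> ?M" using that fin by (intro card_mono) auto
      then show ?thesis unfolding t_def
        by (intro sum.mono_neutral_left) (auto intro: Nz)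
    qed
    have "inc_mult s t x y = (\<Sum>z\<in>?I. s x z * (\<Sum>j<?M. inc_pow N j z y))"
      unfolding inc_mult_def using ext by (intro sum.cong) auto
    also have "\<dots> = (\<Sum>j<?M. \<Sum>z\<in>?I. s x z * inc_pow N j z y)"
      by (simp add: sum_distrib_left sum.swap[of _ ?I])
    also have "\<dots> = (\<Sum>j<?M. inc_pow N j x y - inc_pow N (Suc j) x y)"
    proof (rule sum.cong, simp)
      fix j
      have "(\<Sum>z\<in>?I. s x z * inc_pow N j z y)
          = (\<Sum>z\<in>?I. inc_one x z * inc_pow N j z y) - (\<Sum>z\<in>?I. N x z * inc_pow N j z y)"
        by (simp add: N_def left_diff_distrib sum_subtractf)
      also have "\<dots> = inc_mult inc_one (inc_pow N j) x y - inc_pow N (Suc j) x y"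
        by (simp add: inc_mult_def)
      also have "\<dots> = inc_pow N j x y - inc_pow N (Suc j) x y"
        using mult_one_left[OF LF pow_IA[of N j]] by simp
      finally show "(\<Sum>z\<in>?I. s x z * inc_pow N j z y) = inc_pow N j x y - inc_pow N (Suc j) x y" .
    qed
    also have "\<dots> = inc_pow N 0 x y - inc_pow N ?M x y"
      by (rule sum_lessThan_telescope')
    also have "\<dots> = inc_one x y" using Nz[of x y ?M] by simp
    finally show ?thesis .
  qed
  then show ?thesis using tIA tdiag by blast
qed

lemma unitri_inv:
  fixes s :: "'a::order \<Rightarrow> 'a \<Rightarrow> 'b::field"
  assumes LF: "\<forall>x y::'a. finite {x..y}" and s: "s \<in> IA" and s1: "\<forall>x. s x x = 1"
  shows "\<exists>t. t \<in> IA \<and> inc_mult s t = inc_one \<and> inc_mult t s = inc_one"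
proof -
  obtain t where t: "t \<in> IA" "inc_mult s t = inc_one" "\<forall>x. t x x = 1"
    using unitri_right_inv[OF LF s s1] by blast
  obtain r where r: "r \<in> IA" "inc_mult t r = inc_one"
    using unitri_right_inv[OF LF t(1) t(3)] by blast
  have "s = inc_mult s (inc_mult t r)" using r mult_one_right[OF LF s] by simp
  also have "\<dots> = inc_mult (inc_mult s t) r" using assoc[OF LF t(1)] by simp
  also have "\<dots> = r" using t(2) mult_one_left[OF LF r(1)] by simp
  finally have "s = r" .
  then show ?thesis using t r by blast
qed

lemma char_ok:
  fixes w :: "'b::field"
  assumes n: "n \<ge> 1" and w: "primitive_root_of_unity n w"
  shows "of_nat n \<noteq> (0::'b)"
proof
  assume n0: "of_nat n = (0::'b)"
  then have cpos: "CHAR('b) > 0" using n CHAR_pos_iff by (metis less_le_trans zero_less_one)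
  then have cp: "prime CHAR('b)" by (rule prime_CHAR_semidom)
  have "CHAR('b) dvd n" using n0 of_nat_eq_0_iff_char_dvd by blast
  then obtain m where m: "n = CHAR('b) * m" by blast
  have mpos: "m > 0" using m n by (cases m) auto
  have mlt: "m < n" using m mpos prime_gt_1_nat[OF cp] by simp
  define x where "x = w ^ m"
  have "x ^ CHAR('b) = 1" using w m by (simp add: x_def primitive_root_of_unity_def power_mult[symmetric] mult.commute)
  have "(x + (-1)) ^ CHAR('b) = x ^ CHAR('b) + (-1) ^ CHAR('b)"
    by (rule freshmans_dream[OF cp refl])
  also have "(-1::'b) ^ CHAR('b) = - (1 ^ CHAR('b))" by (rule minus_power_prime_CHAR[OF refl cp])
  finally have "(x - 1) ^ CHAR('b) = 0" using \<open>x ^ CHAR('b) = 1\<close> by simp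
  then have "x = 1" by simp
  then show False using w mpos mlt by (auto simp: x_def primitive_root_of_unity_def)
qed


lemma diag_mult:
  fixes d :: "'a::order \<Rightarrow> 'a \<Rightarrow> 'b::field"
  assumes LF: "\<forall>x y::'a. finite {x..y}" and d: "is_diagonal d" and g: "g \<in> IA"
  shows "inc_mult d g x y = d x x * g x y"
proof -
  have "inc_mult d g x y = (\<Sum>z\<in>{x..y}. if x = z then d x x * g x y else 0)"
    unfolding inc_mult_def using d by (intro sum.cong) (auto simp: is_diagonal_def)
  also have "\<dots> = (if x \<in> {x..y} then d x x * g x y else 0)" using LF[rule_format, of x y] by simp
  also have "\<dots> = d x x * g x y" using g by (auto simp: IA_iff)
  finally show ?thesis .
qed

lemma diag_pow:
  fixes d :: "'a::order \<Rightarrow> 'a \<Rightarrow> 'b::field"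
  assumes LF: "\<forall>x y::'a. finite {x..y}" and d: "is_diagonal d"
  shows "inc_pow d m = (\<lambda>x y. if x = y then d x x ^ m else 0)"
proof (induct m)
  case 0 then show ?case by (auto simp: inc_one_def fun_eq_iff)
next
  case (Suc m)
  show ?case
  proof (rule ext, rule ext)
    fix x y
    have "inc_pow d (Suc m) x y = d x x * inc_pow d m x y"
      by (simp add: diag_mult[OF LF d pow_IA])
    then show "inc_pow d (Suc m) x y = (if x = y then d x x ^ Suc m else 0)"
      using Suc by simp
  qed
qed

lemma shift_lemma:
  fixes a :: "nat \<Rightarrow> 'b::field"
  assumes n: "n \<ge> 1" and c: "c ^ n = 1" and lc: "lam * c = 1" and a: "a (Suc n) = a 1"
  shows "(\<Sum>i<n. c ^ Suc i * a (Suc (Suc i))) = lam * (\<Sum>i<n. c ^ Suc i * a (Suc i))"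
proof -
  obtain m where m: "n = Suc m" using n by (cases n) auto
  have "lam * (\<Sum>i<n. c ^ Suc i * a (Suc i)) = (\<Sum>i<n. c ^ i * a (Suc i))"
    by (simp add: sum_distrib_left mult.assoc[symmetric] lc)
  also have "\<dots> = a 1 + (\<Sum>i<m. c ^ Suc i * a (Suc (Suc i)))"
    unfolding m sum.lessThan_Suc_shift by simp
  also have "\<dots> = (\<Sum>i<n. c ^ Suc i * a (Suc (Suc i)))"
    unfolding m sum.lessThan_Suc using c a m by simp
  finally show ?thesis by simp
qed

theorem propositionA4:
  fixes k :: nat and f :: "'a::order \<Rightarrow> 'a \<Rightarrow> 'b::field"
  assumes "k \<ge> 2"
    and "locally_finite_poset TYPE('a)"
    and "\<exists>\<omega>::'b. primitive_root_of_unity (k - 1) \<omega>"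
    and "f \<in> incidence_algebra"
  shows "inc_pow f k = f \<longleftrightarrow>
    (\<exists>\<sigma> \<tau> d. \<sigma> \<in> incidence_algebra \<and> \<tau> \<in> incidence_algebra
       \<and> inc_mult \<sigma> \<tau> = inc_one \<and> inc_mult \<tau> \<sigma> = inc_one
       \<and> d \<in> incidence_algebra \<and> is_diagonal d
       \<and> (\<forall>x. d x x = 0 \<or> d x x ^ (k - 1) = 1)
       \<and> f = inc_mult (inc_mult \<sigma> d) \<tau>)"
proof -
  have LF: "\<forall>x y::'a. finite {x..y}" using assms(2) by (simp add: locally_finite_poset_def)
  obtain n where kn: "k = Suc n" and n1: "n \<ge> 1" using assms(1) by (cases k) auto
  have km1: "k - 1 = n" using kn by simp
  have fIA: "f \<in> IA" using assms(4) .
  show ?thesis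
  proof
    assume fk: "inc_pow f k = f"
    obtain w :: 'b where w: "primitive_root_of_unity n w" using assms(3) km1 by auto
    have nz: "of_nat n \<noteq> (0::'b)" by (rule char_ok[OF n1 w])
    have Pk: "inc_pow f (Suc n) = f" using fk kn by simp
    have root: "f y y ^ n = 1" if "f y y \<noteq> 0" for y
    proof -
      have "f y y ^ Suc n = f y y" using pow_diag[of f "Suc n" y] Pk by simp
      then show ?thesis using that by simp
    qed
    have PIA: "\<And>j x y. \<not> x \<le> y \<Longrightarrow> inc_pow f j x y = 0" using pow_IA by (auto simp: IA_iff)
    define \<sigma> where "\<sigma> = (\<lambda>x y. if f y y = 0 then inc_one x y - inc_pow f n x y
        else (\<Sum>i<n. inverse (f y y) ^ Suc i * inc_pow f (Suc i) x y) / of_nat n)"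
    define d where "d = (\<lambda>x y. if x = y then f x x else (0::'b))"
    have sIA: "\<sigma> \<in> IA" by (auto simp: IA_iff \<sigma>_def inc_one_def PIA simp del: inc_pow.simps)
    have sdiag: "\<forall>x. \<sigma> x x = 1"
    proof
      fix x
      show "\<sigma> x x = 1"
      proof (cases "f x x = 0")
        case True then show ?thesis using n1 by (simp add: \<sigma>_def inc_one_def pow_diag)
      next
        case False
        have "\<And>i. inverse (f x x) ^ Suc i * f x x ^ Suc i = 1"
          using False by (simp add: power_mult_distrib[symmetric] del: power_Suc)
        then show ?thesis using False nz by (simp add: \<sigma>_def pow_diag mult_diag)
      qed
    qed
    have dIA: "d \<in> IA" by (auto simp: IA_iff d_def)
    have ddiag: "is_diagonal d" by (simp add: is_diagonal_def d_def)
    have comm: "inc_mult f \<sigma> = inc_mult \<sigma> d"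
    proof (rule ext, rule ext)
      fix x y :: 'a
      let ?I = "{x..y}"
      have rhs: "inc_mult \<sigma> d x y = \<sigma> x y * f y y"
      proof -
        have "inc_mult \<sigma> d x y = (\<Sum>z\<in>?I. if z = y then \<sigma> x y * f y y else 0)"
          unfolding inc_mult_def d_def by (intro sum.cong) auto
        also have "\<dots> = (if y \<in> ?I then \<sigma> x y * f y y else 0)" using LF[rule_format, of x y] by simp
        also have "\<dots> = \<sigma> x y * f y y" using sIA by (auto simp: IA_iff)
        finally show ?thesis .
      qed
      show "inc_mult f \<sigma> x y = inc_mult \<sigma> d x y"
      proof (cases "f y y = 0")
        case True
        have "inc_mult f \<sigma> x y = (\<Sum>z\<in>?I. f x z * (inc_one z y - inc_pow f n z y))"
          unfolding inc_mult_def \<sigma>_def using True by simp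
        also have "\<dots> = (\<Sum>z\<in>?I. f x z * inc_one z y) - (\<Sum>z\<in>?I. f x z * inc_pow f n z y)"
          by (simp add: right_diff_distrib sum_subtractf)
        also have "\<dots> = inc_mult f inc_one x y - inc_pow f (Suc n) x y"
          by (simp add: inc_mult_def)
        also have "\<dots> = 0" using mult_one_right[OF LF fIA] Pk by simp
        finally show ?thesis using rhs True by simp
      next
        case False
        define c where "c = inverse (f y y)"
        define a where "a = (\<lambda>j. inc_pow f j x y)"
        have "inc_mult f \<sigma> x y = (\<Sum>z\<in>?I. f x z * ((\<Sum>i<n. c ^ Suc i * inc_pow f (Suc i) z y) / of_nat n))"
          unfolding inc_mult_def \<sigma>_def c_def using False by simp
        also have "\<dots> = (\<Sum>z\<in>?I. \<Sum>i<n. c ^ Suc i * (f x z * inc_pow f (Suc i) z y)) / of_nat n"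
          by (simp add: sum_divide_distrib sum_distrib_left mult.left_commute)
        also have "\<dots> = (\<Sum>i<n. c ^ Suc i * (\<Sum>z\<in>?I. f x z * inc_pow f (Suc i) z y)) / of_nat n"
          by (simp add: sum.swap[of _ ?I] sum_distrib_left)
        also have "\<dots> = (\<Sum>i<n. c ^ Suc i * a (Suc (Suc i))) / of_nat n"
          by (simp add: a_def inc_mult_def)
        also have "\<dots> = f y y * (\<Sum>i<n. c ^ Suc i * a (Suc i)) / of_nat n"
        proof -
          have "c ^ n = 1" using root[OF False] by (simp add: c_def power_inverse)
          moreover have "f y y * c = 1" using False by (simp add: c_def)
          moreover have "a (Suc n) = a 1" using Pk by (simp add: a_def mult_one_right[OF LF fIA])
          ultimately show ?thesis using shift_lemma[OF n1, of c "f y y" a] by simp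
        qed
        also have "\<dots> = \<sigma> x y * f y y"
          using False by (simp add: \<sigma>_def a_def c_def)
        finally show ?thesis using rhs by simp
      qed
    qed
    obtain \<tau> where t: "\<tau> \<in> IA" "inc_mult \<sigma> \<tau> = inc_one" "inc_mult \<tau> \<sigma> = inc_one"
      using unitri_inv[OF LF sIA sdiag] by blast
    have "f = inc_mult f inc_one" using mult_one_right[OF LF fIA] by simp
    also have "\<dots> = inc_mult f (inc_mult \<sigma> \<tau>)" using t by simp
    also have "\<dots> = inc_mult (inc_mult f \<sigma>) \<tau>" using assoc[OF LF sIA] by simp
    also have "\<dots> = inc_mult (inc_mult \<sigma> d) \<tau>" using comm by simp
    finally have fe: "f = inc_mult (inc_mult \<sigma> d) \<tau>" .
    have dent: "\<forall>x. d x x = 0 \<or> d x x ^ (k - 1) = 1" using root km1 by (auto simp: d_def)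
    show "\<exists>\<sigma> \<tau> d. \<sigma> \<in> incidence_algebra \<and> \<tau> \<in> incidence_algebra
       \<and> inc_mult \<sigma> \<tau> = inc_one \<and> inc_mult \<tau> \<sigma> = inc_one
       \<and> d \<in> incidence_algebra \<and> is_diagonal d
       \<and> (\<forall>x. d x x = 0 \<or> d x x ^ (k - 1) = 1)
       \<and> f = inc_mult (inc_mult \<sigma> d) \<tau>"
      using sIA t dIA ddiag dent fe by blast
  next
    assume "\<exists>\<sigma> \<tau> d. \<sigma> \<in> incidence_algebra \<and> \<tau> \<in> incidence_algebra
       \<and> inc_mult \<sigma> \<tau> = inc_one \<and> inc_mult \<tau> \<sigma> = inc_one
       \<and> d \<in> incidence_algebra \<and> is_diagonal d
       \<and> (\<forall>x. d x x = 0 \<or> d x x ^ (k - 1) = 1)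
       \<and> f = inc_mult (inc_mult \<sigma> d) \<tau>"
    then obtain \<sigma> \<tau> d where sIA: "\<sigma> \<in> IA" and tIA: "\<tau> \<in> IA" and ts: "inc_mult \<tau> \<sigma> = inc_one"
      and dIA: "d \<in> IA" and dd: "is_diagonal d" and dent: "\<forall>x. d x x = 0 \<or> d x x ^ (k - 1) = 1"
      and fe: "f = inc_mult (inc_mult \<sigma> d) \<tau>" by blast
    have pw: "inc_pow f (Suc j) = inc_mult (inc_mult \<sigma> (inc_pow d (Suc j))) \<tau>" for j
    proof (induct j)
      case 0
      have "inc_pow f (Suc 0) = f" using mult_one_right[OF LF fIA] by simp
      moreover have "inc_pow d (Suc 0) = d" using mult_one_right[OF LF dIA] by simp
      ultimately show ?case using fe by simp
    next
      case (Suc j)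
      let ?D = "inc_pow d (Suc j)"
      have DIA: "?D \<in> IA" by (rule pow_IA)
      have "inc_pow f (Suc (Suc j)) = inc_mult (inc_mult (inc_mult \<sigma> d) \<tau>) (inc_mult (inc_mult \<sigma> ?D) \<tau>)"
        using Suc fe by simp
      also have "\<dots> = inc_mult (inc_mult \<sigma> d) (inc_mult \<tau> (inc_mult (inc_mult \<sigma> ?D) \<tau>))"
        by (rule assoc[OF LF tIA])
      also have "inc_mult \<tau> (inc_mult (inc_mult \<sigma> ?D) \<tau>) = inc_mult (inc_mult \<tau> (inc_mult \<sigma> ?D)) \<tau>"
        by (rule assoc[OF LF mult_IA, symmetric])
      also have "inc_mult \<tau> (inc_mult \<sigma> ?D) = inc_mult (inc_mult \<tau> \<sigma>) ?D"
        by (rule assoc[OF LF sIA, symmetric])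
      also have "\<dots> = ?D" using ts mult_one_left[OF LF DIA] by simp
      also have "inc_mult (inc_mult \<sigma> d) (inc_mult ?D \<tau>) = inc_mult (inc_mult (inc_mult \<sigma> d) ?D) \<tau>"
        by (rule assoc[OF LF DIA, symmetric])
      also have "inc_mult (inc_mult \<sigma> d) ?D = inc_mult \<sigma> (inc_mult d ?D)"
        by (rule assoc[OF LF dIA])
      finally show ?case by simp
    qed
    have "inc_pow d k = d"
    proof (rule ext, rule ext)
      fix x y :: 'a
      show "inc_pow d k x y = d x y"
      proof (cases "x = y")
        case True
        have "d x x ^ k = d x x" using dent[rule_format, of x] kn by auto
        then show ?thesis using True diag_pow[OF LF dd, of k] by simp
      next
        case False
        then show ?thesis using dd diag_pow[OF LF dd, of k] by (simp add: is_diagonal_def)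
      qed
    qed
    then show "inc_pow f k = f" using pw[of n] kn fe by simp
  qed
qed

end
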